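(* Let $\{G_i\}$ be a family of connected graphs with common induced subgraph $J$, embedded as $J_i\subseteq G_i$, and let $H=\amalg\{(G_i|J_i)\}$. Then every $G_i$ is isometrically embedded in $H$ if and only if the family $\{(G_i|J_i)\}$ is isometric.
   Context: $d_G$ is shortest-path distance in $G$. $J$ is a common induced subgraph of each $G_i$ via injective maps $\iota_i:V(J)\to V(G_i)$ with $\iota_i(x)\iota_i(y)\in E(G_i)$ iff $xy\in E(J)$; $J_i$ is the induced image and $x^i=\iota_i(x)$. $H=\amalg\{(G_i|J_i)\}$ is obtained from the disjoint union of the $G_i$ by identifying, for each $x\in V(J)$, all $x^i$ into one vertex; each $G_i$ is regarded as a subgraph of $H$. A subgraph $G$ of a graph $H$ is isometrically embedded in $H$ if $d_G(u,v)=d_H(u,v)$ for all $u,v\in V(G)$. The family $\{(G_i|J_i)\}$ is isometric if $d_{G_i}(a^i,b^i)=d_{G_j}(a^j,b^j)$ for all $i,j$ and all $a,b\in V(J)$. *)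

theory Defs
  imports Main "HOL-Library.Extended_Nat"
begin

record 'v sgraph =
  verts :: "'v set"
  edges :: "'v set set"

definition wf_graph :: "'v sgraph \<Rightarrow> bool" where
  "wf_graph G \<longleftrightarrow> (\<forall>e\<in>edges G. \<exists>u v. e = {u, v} \<and> u \<noteq> v \<and> u \<in> verts G \<and> v \<in> verts G)"

definition adj :: "'v sgraph \<Rightarrow> 'v \<Rightarrow> 'v \<Rightarrow> bool" where
  "adj G u v \<longleftrightarrow> {u, v} \<in> edges G"

definition walk :: "'v sgraph \<Rightarrow> 'v list \<Rightarrow> bool" where
  "walk G xs \<longleftrightarrow> xs \<noteq> [] \<and> set xs \<subseteq> verts G \<and>
     (\<forall>k. Suc k < length xs \<longrightarrow> adj G (xs ! k) (xs ! Suc k))"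

text \<open>Shortest-path distance (infinite if no walk exists).\<close>
definition gdist :: "'v sgraph \<Rightarrow> 'v \<Rightarrow> 'v \<Rightarrow> enat" where
  "gdist G u v = (INF xs \<in> {xs. walk G xs \<and> hd xs = u \<and> last xs = v}. enat (length xs - 1))"

definition connected_graph :: "'v sgraph \<Rightarrow> bool" where
  "connected_graph G \<longleftrightarrow> verts G \<noteq> {} \<and>
     (\<forall>u\<in>verts G. \<forall>v\<in>verts G. \<exists>xs. walk G xs \<and> hd xs = u \<and> last xs = v)"

definition induced_embedding :: "'w sgraph \<Rightarrow> 'v sgraph \<Rightarrow> ('w \<Rightarrow> 'v) \<Rightarrow> bool" where
  "induced_embedding J G \<iota> \<longleftrightarrow> inj_on \<iota> (verts J) \<and> \<iota> ` verts J \<subseteq> verts G \<and>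
     (\<forall>x\<in>verts J. \<forall>y\<in>verts J. adj G (\<iota> x) (\<iota> y) \<longleftrightarrow> adj J x y)"

text \<open>Amalgamation: vertices of H are the classes of the disjoint union
  \<open>{(i,v). i \<in> I, v \<in> V(G i)}\<close> under the identification of all copies
  \<open>(i, \<iota> i x)\<close> of a vertex \<open>x\<close> of \<open>J\<close>. \<open>amal_cls\<close> is the class of \<open>(i,v)\<close>.\<close>
definition amal_cls :: "'i set \<Rightarrow> ('i \<Rightarrow> 'v sgraph) \<Rightarrow> 'w sgraph \<Rightarrow> ('i \<Rightarrow> 'w \<Rightarrow> 'v)
    \<Rightarrow> 'i \<Rightarrow> 'v \<Rightarrow> ('i \<times> 'v) set" where
  "amal_cls I G J \<iota> i v = {(j, w). j \<in> I \<and> w \<in> verts (G j) \<and>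
      ((j, w) = (i, v) \<or> (\<exists>x\<in>verts J. v = \<iota> i x \<and> w = \<iota> j x))}"

definition amalgam :: "'i set \<Rightarrow> ('i \<Rightarrow> 'v sgraph) \<Rightarrow> 'w sgraph \<Rightarrow> ('i \<Rightarrow> 'w \<Rightarrow> 'v)
    \<Rightarrow> ('i \<times> 'v) set sgraph" where
  "amalgam I G J \<iota> =
     \<lparr> verts = {amal_cls I G J \<iota> i v | i v. i \<in> I \<and> v \<in> verts (G i)},
       edges = {{amal_cls I G J \<iota> i u, amal_cls I G J \<iota> i v} | i u v. i \<in> I \<and> {u, v} \<in> edges (G i)} \<rparr>"

definition isometric_in_amalgam :: "'i set \<Rightarrow> ('i \<Rightarrow> 'v sgraph) \<Rightarrow> 'w sgraph \<Rightarrow> ('i \<Rightarrow> 'w \<Rightarrow> 'v)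
    \<Rightarrow> 'i \<Rightarrow> bool" where
  "isometric_in_amalgam I G J \<iota> i \<longleftrightarrow>
     (\<forall>u\<in>verts (G i). \<forall>v\<in>verts (G i).
        gdist (G i) u v = gdist (amalgam I G J \<iota>) (amal_cls I G J \<iota> i u) (amal_cls I G J \<iota> i v))"

definition isometric_family :: "'i set \<Rightarrow> ('i \<Rightarrow> 'v sgraph) \<Rightarrow> 'w sgraph \<Rightarrow> ('i \<Rightarrow> 'w \<Rightarrow> 'v) \<Rightarrow> bool" where
  "isometric_family I G J \<iota> \<longleftrightarrow>
     (\<forall>i\<in>I. \<forall>j\<in>I. \<forall>a\<in>verts J. \<forall>b\<in>verts J.
        gdist (G i) (\<iota> i a) (\<iota> i b) = gdist (G j) (\<iota> j a) (\<iota> j b))"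

end

theory Submission
  imports Defs
begin

lemma INF_attain_enat:
  assumes "S \<noteq> {}"
  shows "\<exists>x\<in>S. (INF y\<in>S. (f y :: enat)) = f x"
proof -
  have "f ` S \<noteq> {}" using assms by auto
  then have "Inf (f ` S) \<in> f ` S"
    unfolding Inf_enat_def by (auto intro: LeastI)
  then show ?thesis by auto
qed

lemma walk_single[simp]: "walk G [x] \<longleftrightarrow> x \<in> verts G"
  by (simp add: walk_def)

lemma walk_Cons_Cons[simp]:
  "walk G (x#y#xs) \<longleftrightarrow> x \<in> verts G \<and> adj G x y \<and> walk G (y#xs)"
proof
  assume "walk G (x#y#xs)"
  then show "x \<in> verts G \<and> adj G x y \<and> walk G (y#xs)"
  proof -
    assume A: "walk G (x#y#xs)"
    have "adj G x y" using A unfolding walk_def by (metis length_Cons nth_Cons_0 nth_Cons_Suc zero_less_Suc Suc_less_eq)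
    moreover have "walk G (y#xs)" unfolding walk_def
    proof (intro conjI allI impI)
      fix k assume "Suc k < length (y#xs)"
      then have "Suc (Suc k) < length (x#y#xs)" by simp
      then show "adj G ((y # xs) ! k) ((y # xs) ! Suc k)" using A unfolding walk_def by (metis nth_Cons_Suc)
    qed (use A in \<open>auto simp: walk_def\<close>)
    ultimately show ?thesis using A by (simp add: walk_def)
  qed
next
  assume A: "x \<in> verts G \<and> adj G x y \<and> walk G (y#xs)"
  show "walk G (x#y#xs)"
    unfolding walk_def
  proof (intro conjI allI impI)
    fix k assume "Suc k < length (x#y#xs)"
    then show "adj G ((x#y#xs) ! k) ((x#y#xs) ! Suc k)"
      using A unfolding walk_def by (cases k) auto
  qed (use A in \<open>auto simp: walk_def\<close>)
qed

lemma walk_append: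
  "walk G xs \<Longrightarrow> walk G ys \<Longrightarrow> last xs = hd ys \<Longrightarrow> walk G (xs @ tl ys)"
proof (induction xs)
  case Nil then show ?case by (simp add: walk_def)
next
  case (Cons x xs)
  show ?case
  proof (cases xs)
    case Nil
    with Cons have "ys \<noteq> []" "x = hd ys" by (auto simp: walk_def)
    then show ?thesis using Cons Nil by simp
  next
    case (Cons y zs)
    with Cons.prems Cons.IH show ?thesis by auto
  qed
qed

lemma gdist_le:
  "walk G xs \<Longrightarrow> hd xs = u \<Longrightarrow> last xs = v \<Longrightarrow> gdist G u v \<le> enat (length xs - 1)"
  unfolding gdist_def by (rule INF_lower) auto

lemma gdist_lowerI:
  "(\<And>xs. walk G xs \<Longrightarrow> hd xs = u \<Longrightarrow> last xs = v \<Longrightarrow> d \<le> enat (length xs - 1)) \<Longrightarrow> d \<le> gdist G u v"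
  unfolding gdist_def by (rule INF_greatest) auto

lemma gdist_ex:
  assumes "gdist G u v \<noteq> \<infinity>"
  shows "\<exists>xs. walk G xs \<and> hd xs = u \<and> last xs = v \<and> gdist G u v = enat (length xs - 1)"
proof -
  let ?S = "{xs. walk G xs \<and> hd xs = u \<and> last xs = v}"
  have "?S \<noteq> {}"
  proof
    assume "?S = {}"
    then have "gdist G u v = \<infinity>" unfolding gdist_def \<open>?S = {}\<close> by (simp add: top_enat_def)
    with assms show False by simp
  qed
  from INF_attain_enat[OF this, of "\<lambda>xs. enat (length xs - 1)"] show ?thesis
    unfolding gdist_def by auto
qed

lemma gdist_triangle: "gdist G u w \<le> gdist G u v + gdist G v w"
proof (cases "gdist G u v = \<infinity> \<or> gdist G v w = \<infinity>")
  case True then show ?thesis by auto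
next
  case False
  then obtain xs ys where xs: "walk G xs" "hd xs = u" "last xs = v" "gdist G u v = enat (length xs - 1)"
    and ys: "walk G ys" "hd ys = v" "last ys = w" "gdist G v w = enat (length ys - 1)"
    using gdist_ex by metis
  have ne: "xs \<noteq> []" "ys \<noteq> []" using xs ys by (auto simp: walk_def)
  have W: "walk G (xs @ tl ys)" by (rule walk_append) (use xs ys in auto)
  have "hd (xs @ tl ys) = u" using ne xs by simp
  moreover have "last (xs @ tl ys) = w"
    using ne xs ys by (cases "tl ys = []") (auto simp: last_tl, metis hd_Cons_tl last_ConsL)
  ultimately have "gdist G u w \<le> enat (length (xs @ tl ys) - 1)" using gdist_le W by metis
  also have "\<dots> = gdist G u v + gdist G v w" using xs ys ne by (cases xs; cases ys) auto
  finally show ?thesis .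
qed

lemma gdist_refl: "u \<in> verts G \<Longrightarrow> gdist G u u = 0"
  using gdist_le[of G "[u]" u u] by (simp add: zero_enat_def[symmetric])

lemma gdist_edge: "adj G x y \<Longrightarrow> x \<in> verts G \<Longrightarrow> y \<in> verts G \<Longrightarrow> gdist G x y \<le> 1"
  using gdist_le[of G "[x,y]" x y] by (simp add: one_enat_def)

lemma adj_verts: "wf_graph G \<Longrightarrow> adj G x y \<Longrightarrow> x \<in> verts G \<and> y \<in> verts G"
  unfolding wf_graph_def adj_def by (fastforce simp: doubleton_eq_iff)

lemma adj_sym: "adj G x y \<Longrightarrow> adj G y x"
  unfolding adj_def by (simp add: insert_commute)

lemma lip_walk:
  assumes "\<And>c c'. adj H c c' \<Longrightarrow> \<phi> c \<le> \<phi> c' + 1"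
  shows "walk H xs \<Longrightarrow> \<phi> (hd xs) \<le> \<phi> (last xs) + enat (length xs - 1)"
proof (induction xs)
  case Nil then show ?case by (simp add: walk_def)
next
  case (Cons x xs)
  show ?case
  proof (cases xs)
    case Nil then show ?thesis by (simp add: zero_enat_def)
  next
    case (Cons y zs)
    with Cons.prems have "adj H x y" "walk H (y#zs)" by auto
    then have "\<phi> x \<le> \<phi> y + 1" "\<phi> y \<le> \<phi> (last (y#zs)) + enat (length zs)"
      using assms Cons.IH Cons by auto
    then have "\<phi> x \<le> \<phi> (last (y#zs)) + enat (length zs) + 1"
      by (meson add_right_mono order_trans)
    then show ?thesis using Cons by (simp add: eSuc_enat[symmetric] eSuc_plus_1 add.assoc)
  qed
qed

lemma cls_mem: "i \<in> I \<Longrightarrow> v \<in> verts (G i) \<Longrightarrow> (i, v) \<in> amal_cls I G J \<iota> i v"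
  unfolding amal_cls_def by simp

lemma cls_eqD:
  assumes "j \<in> I" "w \<in> verts (G j)" "amal_cls I G J \<iota> i v = amal_cls I G J \<iota> j w"
  shows "(i, v) = (j, w) \<or> (\<exists>x\<in>verts J. v = \<iota> i x \<and> w = \<iota> j x)"
proof -
  have "(j, w) \<in> amal_cls I G J \<iota> i v" using assms cls_mem by metis
  then show ?thesis unfolding amal_cls_def by auto
qed

lemma cls_J:
  assumes emb: "\<And>i. i \<in> I \<Longrightarrow> induced_embedding J (G i) (\<iota> i)"
    and "i \<in> I" "a \<in> verts J"
  shows "amal_cls I G J \<iota> i (\<iota> i a) = {(k, \<iota> k a) | k. k \<in> I}"
proof -
  have inj: "inj_on (\<iota> i) (verts J)" and im: "\<And>k. k \<in> I \<Longrightarrow> \<iota> k a \<in> verts (G k)"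
    using emb assms unfolding induced_embedding_def by auto
  show ?thesis
  proof -
    have X: "\<And>x. x \<in> verts J \<Longrightarrow> \<iota> i a = \<iota> i x \<Longrightarrow> x = a"
      using inj assms(3) by (metis inj_onD)
    show ?thesis unfolding amal_cls_def using assms im X by auto
  qed
qed

lemma lower_bound:
  assumes wfG: "\<And>i. i \<in> I \<Longrightarrow> wf_graph (G i)"
    and emb: "\<And>i. i \<in> I \<Longrightarrow> induced_embedding J (G i) (\<iota> i)"
    and fam: "isometric_family I G J \<iota>"
    and i: "i \<in> I" and u: "u \<in> verts (G i)" and v: "v \<in> verts (G i)"
    and W: "walk (amalgam I G J \<iota>) ys" "hd ys = amal_cls I G J \<iota> i u" "last ys = amal_cls I G J \<iota> i v"
  shows "gdist (G i) u v \<le> enat (length ys - 1)"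
proof -
  define cls where "cls = amal_cls I G J \<iota>"
  define \<psi> where "\<psi> j w = (if j = i then gdist (G i) w v
      else (INF a\<in>verts J. gdist (G j) w (\<iota> j a) + gdist (G i) (\<iota> i a) v))" for j w
  have imv: "\<iota> k a \<in> verts (G k)" if "k \<in> I" "a \<in> verts J" for k a
    using emb that unfolding induced_embedding_def by auto
  have psiJ: "\<psi> j (\<iota> j a) = gdist (G i) (\<iota> i a) v" if j: "j \<in> I" and a: "a \<in> verts J" for j a
  proof (cases "j = i")
    case True then show ?thesis by (simp add: \<psi>_def)
  next
    case False
    have eq: "gdist (G j) (\<iota> j a) (\<iota> j b) = gdist (G i) (\<iota> i a) (\<iota> i b)" if "b \<in> verts J" for b
      using fam j i a that unfolding isometric_family_def by metis
    have "(INF b\<in>verts J. gdist (G j) (\<iota> j a) (\<iota> j b) + gdist (G i) (\<iota> i b) v) = gdist (G i) (\<iota> i a) v"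
    proof (rule antisym)
      show "(INF b\<in>verts J. gdist (G j) (\<iota> j a) (\<iota> j b) + gdist (G i) (\<iota> i b) v) \<le> gdist (G i) (\<iota> i a) v"
        using a eq[OF a] gdist_refl[OF imv[OF i a]] by (intro INF_lower2[OF a]) simp
      show "gdist (G i) (\<iota> i a) v \<le> (INF b\<in>verts J. gdist (G j) (\<iota> j a) (\<iota> j b) + gdist (G i) (\<iota> i b) v)"
        using eq gdist_triangle by (intro INF_greatest) simp
    qed
    then show ?thesis using False by (simp add: \<psi>_def)
  qed
  have wd: "\<psi> j w = \<psi> k w'" if "k \<in> I" "w' \<in> verts (G k)" "j \<in> I" "cls j w = cls k w'" for j w k w'
  proof -
    have "(j,w)=(k,w') \<or> (\<exists>x\<in>verts J. w = \<iota> j x \<and> w' = \<iota> k x)"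
      using cls_eqD[of k I w' G J \<iota> j w] that unfolding cls_def by blast
    then show ?thesis
    proof
      assume "(j,w)=(k,w')" then show ?thesis by simp
    next
      assume "\<exists>x\<in>verts J. w = \<iota> j x \<and> w' = \<iota> k x"
      then obtain x where x: "x \<in> verts J" "w = \<iota> j x" "w' = \<iota> k x" by blast
      show ?thesis using psiJ[OF that(3) x(1)] psiJ[OF that(1) x(1)] x by simp
    qed
  qed
  define \<phi> where "\<phi> c = (let r = (SOME r. fst r \<in> I \<and> snd r \<in> verts (G (fst r)) \<and> c = cls (fst r) (snd r))
      in \<psi> (fst r) (snd r))" for c
  have phi: "\<phi> (cls j w) = \<psi> j w" if "j \<in> I" "w \<in> verts (G j)" for j w
  proof -
    let ?P = "\<lambda>r. fst r \<in> I \<and> snd r \<in> verts (G (fst r)) \<and> cls j w = cls (fst r) (snd r)"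
    have "?P (j, w)" using that by simp
    then have "?P (SOME r. ?P r)" by (rule someI)
    then have P: "fst (SOME r. ?P r) \<in> I" "snd (SOME r. ?P r) \<in> verts (G (fst (SOME r. ?P r)))"
      "cls j w = cls (fst (SOME r. ?P r)) (snd (SOME r. ?P r))" by blast+
    have "\<phi> (cls j w) = \<psi> (fst (SOME r. ?P r)) (snd (SOME r. ?P r))" unfolding \<phi>_def Let_def ..
    also have "\<dots> = \<psi> j w" using wd[OF P(1) P(2) that(1) P(3)] by simp
    finally show ?thesis .
  qed
  have psi_lip: "\<psi> j x \<le> \<psi> j y + 1" if j: "j \<in> I" and xy: "adj (G j) x y" for j x y
  proof -
    have xv: "x \<in> verts (G j)" "y \<in> verts (G j)" using adj_verts[OF wfG[OF j] xy] by auto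
    have d1: "gdist (G j) x y \<le> 1" using gdist_edge[OF xy xv] .
    have step: "gdist (G j) x z \<le> gdist (G j) y z + 1" for z
    proof -
      have "gdist (G j) x z \<le> gdist (G j) x y + gdist (G j) y z" by (rule gdist_triangle)
      also have "\<dots> \<le> 1 + gdist (G j) y z" using d1 by (rule add_right_mono)
      finally show ?thesis by (simp add: add.commute)
    qed
    show ?thesis
    proof (cases "j = i")
      case True then show ?thesis using step by (simp add: \<psi>_def)
    next
      case False
      show ?thesis
      proof (cases "verts J = {}")
        case True then show ?thesis using False by (simp add: \<psi>_def)
      next
        case ne: False
        obtain a0 where a0: "a0 \<in> verts J"
          "(INF a\<in>verts J. gdist (G j) y (\<iota> j a) + gdist (G i) (\<iota> i a) v) = gdist (G j) y (\<iota> j a0) + gdist (G i) (\<iota> i a0) v"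
          using INF_attain_enat[OF ne] by blast
        have "(INF a\<in>verts J. gdist (G j) x (\<iota> j a) + gdist (G i) (\<iota> i a) v) \<le> gdist (G j) x (\<iota> j a0) + gdist (G i) (\<iota> i a0) v"
          by (rule INF_lower[OF a0(1)])
        also have "\<dots> \<le> (gdist (G j) y (\<iota> j a0) + 1) + gdist (G i) (\<iota> i a0) v"
          using step by (rule add_right_mono)
        also have "\<dots> = (INF a\<in>verts J. gdist (G j) y (\<iota> j a) + gdist (G i) (\<iota> i a) v) + 1"
          using a0(2) by (simp add: ac_simps)
        finally show ?thesis using False by (simp add: \<psi>_def)
      qed
    qed
  qed
  have lip: "\<phi> c \<le> \<phi> c' + 1" if "adj (amalgam I G J \<iota>) c c'" for c c'
  proof -
    have "{c,c'} \<in> edges (amalgam I G J \<iota>)" using that by (simp add: adj_def)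
    then have "\<exists>j x y. {c,c'} = {cls j x, cls j y} \<and> j \<in> I \<and> {x, y} \<in> edges (G j)"
      unfolding cls_def amalgam_def sgraph.select_convs mem_Collect_eq .
    then obtain j x y where jxy0: "{c, c'} = {cls j x, cls j y} \<and> j \<in> I \<and> {x, y} \<in> edges (G j)"
      by iprover
    then have jxy: "j \<in> I" "{x, y} \<in> edges (G j)" "{c, c'} = {cls j x, cls j y}" by simp_all
    have a: "adj (G j) x y" "adj (G j) y x" using jxy(2) unfolding adj_def by (simp_all add: insert_commute)
    have xv: "x \<in> verts (G j)" "y \<in> verts (G j)" using adj_verts[OF wfG[OF jxy(1)] a(1)] by auto
    from jxy(3) have "(c = cls j x \<and> c' = cls j y) \<or> (c = cls j y \<and> c' = cls j x)"
      by (auto simp: doubleton_eq_iff)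
    then show ?thesis
    proof
      assume "c = cls j x \<and> c' = cls j y"
      then show ?thesis using phi[OF jxy(1) xv(1)] phi[OF jxy(1) xv(2)] psi_lip[OF jxy(1) a(1)] by simp
    next
      assume "c = cls j y \<and> c' = cls j x"
      then show ?thesis using phi[OF jxy(1) xv(1)] phi[OF jxy(1) xv(2)] psi_lip[OF jxy(1) a(2)] by simp
    qed
  qed
  have "\<phi> (hd ys) \<le> \<phi> (last ys) + enat (length ys - 1)" using lip_walk[where H="amalgam I G J \<iota>" and \<phi>=\<phi>, OF lip W(1)] by simp
  moreover have "\<phi> (hd ys) = gdist (G i) u v" using W(2) phi[OF i u] by (simp add: cls_def \<psi>_def)
  moreover have "\<phi> (last ys) = 0" using W(3) phi[OF i v] gdist_refl[OF v] by (simp add: cls_def \<psi>_def)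
  ultimately show ?thesis by simp
qed

lemma upper_bound:
  assumes i: "i \<in> I" and u: "u \<in> verts (G i)" and v: "v \<in> verts (G i)"
  shows "gdist (amalgam I G J \<iota>) (amal_cls I G J \<iota> i u) (amal_cls I G J \<iota> i v) \<le> gdist (G i) u v"
proof (rule gdist_lowerI)
  fix xs assume xs: "walk (G i) xs" "hd xs = u" "last xs = v"
  let ?ys = "map (amal_cls I G J \<iota> i) xs"
  have ne: "xs \<noteq> []" using xs by (simp add: walk_def)
  have "walk (amalgam I G J \<iota>) ?ys"
    unfolding walk_def
  proof (intro conjI allI impI)
    show "?ys \<noteq> []" using ne by simp
    show "set ?ys \<subseteq> verts (amalgam I G J \<iota>)"
    proof
      fix c assume "c \<in> set ?ys"
      then obtain w where w: "w \<in> set xs" "c = amal_cls I G J \<iota> i w" by auto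
      have "w \<in> verts (G i)" using w(1) xs(1) by (auto simp: walk_def)
      then show "c \<in> verts (amalgam I G J \<iota>)" unfolding amalgam_def using w(2) i by auto
    qed
    fix k assume k: "Suc k < length ?ys"
    then have "adj (G i) (xs ! k) (xs ! Suc k)" using xs(1) by (simp add: walk_def)
    then show "adj (amalgam I G J \<iota>) (?ys ! k) (?ys ! Suc k)"
      using k i unfolding adj_def amalgam_def by (simp, blast)
  qed
  moreover have "hd ?ys = amal_cls I G J \<iota> i u" "last ?ys = amal_cls I G J \<iota> i v"
    using xs ne by (auto simp: hd_map last_map)
  ultimately show "gdist (amalgam I G J \<iota>) (amal_cls I G J \<iota> i u) (amal_cls I G J \<iota> i v) \<le> enat (length xs - 1)"
    using gdist_le by fastforce
qed

theorem lemma2: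
  fixes I :: "'i set" and G :: "'i \<Rightarrow> 'v sgraph" and J :: "'w sgraph" and \<iota> :: "'i \<Rightarrow> 'w \<Rightarrow> 'v"
  assumes "wf_graph J"
    and "\<And>i. i \<in> I \<Longrightarrow> wf_graph (G i)"
    and "\<And>i. i \<in> I \<Longrightarrow> connected_graph (G i)"
    and "\<And>i. i \<in> I \<Longrightarrow> induced_embedding J (G i) (\<iota> i)"
  shows "(\<forall>i\<in>I. isometric_in_amalgam I G J \<iota> i) \<longleftrightarrow> isometric_family I G J \<iota>"
proof
  assume iso: "\<forall>i\<in>I. isometric_in_amalgam I G J \<iota> i"
  have imv: "\<iota> k a \<in> verts (G k)" if "k \<in> I" "a \<in> verts J" for k a
    using assms(4) that unfolding induced_embedding_def by auto
  show "isometric_family I G J \<iota>"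
    unfolding isometric_family_def
  proof (intro ballI)
    fix i j a b assume ij: "i \<in> I" "j \<in> I" and ab: "a \<in> verts J" "b \<in> verts J"
    have "gdist (G i) (\<iota> i a) (\<iota> i b) = gdist (amalgam I G J \<iota>) (amal_cls I G J \<iota> i (\<iota> i a)) (amal_cls I G J \<iota> i (\<iota> i b))"
      using iso ij ab imv unfolding isometric_in_amalgam_def by blast
    also have "\<dots> = gdist (amalgam I G J \<iota>) (amal_cls I G J \<iota> j (\<iota> j a)) (amal_cls I G J \<iota> j (\<iota> j b))"
      using cls_J[where I=I and G=G and J=J and \<iota>=\<iota>, OF assms(4) ij(1) ab(1)]
        cls_J[where I=I and G=G and J=J and \<iota>=\<iota>, OF assms(4) ij(2) ab(1)]
        cls_J[where I=I and G=G and J=J and \<iota>=\<iota>, OF assms(4) ij(1) ab(2)]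
        cls_J[where I=I and G=G and J=J and \<iota>=\<iota>, OF assms(4) ij(2) ab(2)] by simp
    also have "\<dots> = gdist (G j) (\<iota> j a) (\<iota> j b)"
      using iso ij ab imv unfolding isometric_in_amalgam_def by metis
    finally show "gdist (G i) (\<iota> i a) (\<iota> i b) = gdist (G j) (\<iota> j a) (\<iota> j b)" .
  qed
next
  assume fam: "isometric_family I G J \<iota>"
  show "\<forall>i\<in>I. isometric_in_amalgam I G J \<iota> i"
    unfolding isometric_in_amalgam_def
  proof (intro ballI antisym)
    fix i u v assume i: "i \<in> I" and u: "u \<in> verts (G i)" and v: "v \<in> verts (G i)"
    show "gdist (amalgam I G J \<iota>) (amal_cls I G J \<iota> i u) (amal_cls I G J \<iota> i v) \<le> gdist (G i) u v"
      by (rule upper_bound[where G=G and J=J and \<iota>=\<iota>, OF i u v])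
    show "gdist (G i) u v \<le> gdist (amalgam I G J \<iota>) (amal_cls I G J \<iota> i u) (amal_cls I G J \<iota> i v)"
      by (rule gdist_lowerI, rule lower_bound[OF assms(2) assms(4) fam i u v]) auto
  qed
qed

end
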